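(* Suppose Assumption A1 holds and $F^*>-\infty$. Then Algorithm (1-RCD), with indices $i_k$ drawn i.i.d. from the uniform distribution on $\{1,\dots,N\}$, generates a sequence $x^k$ satisfying, for all $k\ge0$, $$\min_{0\le l\le k} E\left[\left(M_1(x^l,L)\right)^2\right]\le \frac{2N\,(F(x^0)-F^* )}{k+1},$$ where the expectation is over the random index choices.
   Context: Block structure: $n=\sum_{i=1}^N n_i$, $I_n=[U_1\ \dots\ U_N]$ with $U_i\in\mathbb{R}^{n\times n_i}$, $x_i=U_i^Tx$, $\nabla_i f(x)=U_i^T\nabla f(x)$. Problem: $F^*=\min_{x\in\mathbb{R}^n}F(x):=f(x)+h(x)$. Assumption A1: (i) $f$ is differentiable and there are constants $L_i>0$ with $\|\nabla_i f(x+U_is_i)-\nabla_i f(x)\|\le L_i\|s_i\|$ for all $s_i\in\mathbb{R}^{n_i}$, $x\in\mathbb{R}^n$, $i=1,\dots,N$; (ii) $h$ is proper, convex, continuous and block separable, $h(x)=\sum_{i=1}^N h_i(x_i)$ with each $h_i:\mathbb{R}^{n_i}\to\mathbb{R}$ convex. $L=[L_1\dots L_N]^T$. Algorithm (1-RCD): given $x^0\in\mathbb{R}^n$, for $k\ge0$ choose an index $i_k\in\{1,\dots,N\}$ at random (i.i.d. across iterations), compute $d_{i_k}=\arg\min_{s\in\mathbb{R}^{n_{i_k}}}\ f(x^k)+\langle\nabla_{i_k}f(x^k),s\rangle+\frac{L_{i_k}}{2}\|s\|^2+h(x^k+U_{i_k}s)$, and set $x^{k+1}=x^k+U_{i_k}d_{i_k}$.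 Notation: $\|x\|_L=(\sum_i L_i\|x_i\|^2)^{1/2}$, $\|y\|_L^*=(\sum_i L_i^{-1}\|y_i\|^2)^{1/2}$, $D_L=\mathrm{diag}(L_1I_{n_1},\dots,L_NI_{n_N})$, $d_L(x)=\arg\min_{s\in\mathbb{R}^n} f(x)+\langle\nabla f(x),s\rangle+\frac12\|s\|_L^2+h(x+s)$, $M_1(x,L)=\|D_L d_L(x)\|_L^*$. *)

theory Defs
  imports "HOL-Analysis.Analysis"
begin

text \<open>Coordinates of R^n are the finite type 'n; blocks are the finite type 'm
  (so N = CARD('m)); blk j is the block containing coordinate j.
  A vector of R^{n_i} is identified with its embedding U_i s in R^n, i.e. a vector
  supported on block i.\<close>

definition blockspace :: "('n \<Rightarrow> 'm) \<Rightarrow> 'm \<Rightarrow> (real^'n) set" where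
  "blockspace blk i = {s. \<forall>j. blk j \<noteq> i \<longrightarrow> s $ j = 0}"

text \<open>U_i U_i^T y : the block-i component of y, embedded in R^n.\<close>
definition bproj :: "('n \<Rightarrow> 'm) \<Rightarrow> 'm \<Rightarrow> real^'n \<Rightarrow> real^'n" where
  "bproj blk i y = (\<chi> j. if blk j = i then y $ j else 0)"

definition normL :: "('n \<Rightarrow> 'm::finite) \<Rightarrow> ('m \<Rightarrow> real) \<Rightarrow> real^'n \<Rightarrow> real" where
  "normL blk L x = sqrt (\<Sum>i\<in>UNIV. L i * (norm (bproj blk i x))\<^sup>2)"

definition dnormL :: "('n \<Rightarrow> 'm::finite) \<Rightarrow> ('m \<Rightarrow> real) \<Rightarrow> real^'n \<Rightarrow> real" where
  "dnormL blk L y = sqrt (\<Sum>i\<in>UNIV. (1 / L i) * (norm (bproj blk i y))\<^sup>2)"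

definition DL :: "('n \<Rightarrow> 'm) \<Rightarrow> ('m \<Rightarrow> real) \<Rightarrow> real^'n \<Rightarrow> real^'n" where
  "DL blk L y = (\<chi> j. L (blk j) * y $ j)"

definition dL :: "('n \<Rightarrow> 'm::finite) \<Rightarrow> ('m \<Rightarrow> real) \<Rightarrow> (real^'n \<Rightarrow> real) \<Rightarrow> (real^'n \<Rightarrow> real^'n)
    \<Rightarrow> (real^'n \<Rightarrow> real) \<Rightarrow> real^'n \<Rightarrow> real^'n" where
  "dL blk L f g h x = (THE d. \<forall>s. f x + g x \<bullet> d + 1/2 * (normL blk L d)\<^sup>2 + h (x + d)
                                 \<le> f x + g x \<bullet> s + 1/2 * (normL blk L s)\<^sup>2 + h (x + s))"

definition M1 :: "('n \<Rightarrow> 'm::finite) \<Rightarrow> ('m \<Rightarrow> real) \<Rightarrow> (real^'n \<Rightarrow> real) \<Rightarrow> (real^'n \<Rightarrow> real^'n)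
    \<Rightarrow> (real^'n \<Rightarrow> real) \<Rightarrow> real^'n \<Rightarrow> real" where
  "M1 blk L f g h x = dnormL blk L (DL blk L (dL blk L f g h x))"

definition rcd_step :: "('n \<Rightarrow> 'm) \<Rightarrow> ('m \<Rightarrow> real) \<Rightarrow> (real^'n \<Rightarrow> real) \<Rightarrow> (real^'n \<Rightarrow> real^'n)
    \<Rightarrow> (real^'n \<Rightarrow> real) \<Rightarrow> 'm \<Rightarrow> real^'n \<Rightarrow> real^'n" where
  "rcd_step blk L f g h i x = x + (THE d. d \<in> blockspace blk i \<and>
      (\<forall>s\<in>blockspace blk i.
         f x + bproj blk i (g x) \<bullet> d + L i / 2 * (norm d)\<^sup>2 + h (x + d)
         \<le> f x + bproj blk i (g x) \<bullet> s + L i / 2 * (norm s)\<^sup>2 + h (x + s)))"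

text \<open>The iterate x^k produced by the index sequence i_0, ..., i_{k-1} (a list of length k).\<close>
definition rcd_iter :: "('n \<Rightarrow> 'm) \<Rightarrow> ('m \<Rightarrow> real) \<Rightarrow> (real^'n \<Rightarrow> real) \<Rightarrow> (real^'n \<Rightarrow> real^'n)
    \<Rightarrow> (real^'n \<Rightarrow> real) \<Rightarrow> real^'n \<Rightarrow> 'm list \<Rightarrow> real^'n" where
  "rcd_iter blk L f g h x0 is = foldl (\<lambda>x i. rcd_step blk L f g h i x) x0 is"

text \<open>Expectation of a function of (i_0,...,i_{k-1}) drawn i.i.d. uniformly from the blocks.\<close>
definition unif_expect :: "nat \<Rightarrow> ('m::finite list \<Rightarrow> real) \<Rightarrow> real" where
  "unif_expect k Z = (\<Sum>is\<in>{is::'m list. length is = k}. Z is) / real (CARD('m)) ^ k"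

end

theory Submission
  imports Defs
begin


lemma bproj_add: "bproj blk i (x + y) = bproj blk i x + bproj blk i y"
  by (simp add: bproj_def vec_eq_iff)
lemma bproj_diff: "bproj blk i (x - y) = bproj blk i x - bproj blk i y"
  by (simp add: bproj_def vec_eq_iff)
lemma bproj_scale: "bproj blk i (c *\<^sub>R x) = c *\<^sub>R bproj blk i x"
  by (simp add: bproj_def vec_eq_iff)
lemma bproj_zero[simp]: "bproj blk i 0 = 0"
  by (simp add: bproj_def vec_eq_iff)
lemma bproj_in: "bproj blk i x \<in> blockspace blk i"
  by (simp add: bproj_def blockspace_def)
lemma bproj_same: "s \<in> blockspace blk i \<Longrightarrow> bproj blk i s = s"
  by (auto simp add: bproj_def blockspace_def vec_eq_iff)
lemma bproj_other: "s \<in> blockspace blk i \<Longrightarrow> j \<noteq> i \<Longrightarrow> bproj blk j s = 0"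
  by (auto simp add: bproj_def blockspace_def vec_eq_iff)
lemma bproj_sum: "bproj blk i (sum f A) = (\<Sum>a\<in>A. bproj blk i (f a))"
  by (simp add: bproj_def vec_eq_iff sum_component if_distrib cong: if_cong)
lemma sum_bproj: "(\<Sum>i\<in>(UNIV::'m::finite set). bproj blk i x) = x"
  by (simp add: bproj_def vec_eq_iff sum_component)
lemma blockspace_add: "s \<in> blockspace blk i \<Longrightarrow> t \<in> blockspace blk i \<Longrightarrow> s + t \<in> blockspace blk i"
  by (simp add: blockspace_def)
lemma blockspace_diff: "s \<in> blockspace blk i \<Longrightarrow> t \<in> blockspace blk i \<Longrightarrow> s - t \<in> blockspace blk i"
  by (simp add: blockspace_def)
lemma blockspace_scale: "s \<in> blockspace blk i \<Longrightarrow> c *\<^sub>R s \<in> blockspace blk i"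
  by (simp add: blockspace_def)
lemma blockspace_zero: "0 \<in> blockspace blk i"
  by (simp add: blockspace_def)
lemma closed_blockspace: "closed (blockspace blk i)"
proof -
  have "blockspace blk i = {s. s - bproj blk i s = 0}"
    by (auto simp: blockspace_def bproj_def vec_eq_iff split: if_splits)
  moreover have "closed {s::real^'a. s - bproj blk i s = 0}"
  proof -
    have "\<And>j. continuous_on UNIV (\<lambda>x::real^'a. if blk j = i then x $ j else 0)"
      by (case_tac "blk j = i") (auto intro!: continuous_intros)
    then show ?thesis
      unfolding bproj_def by (intro closed_Collect_eq continuous_intros) (auto simp: continuous_on_vec_lambda)
  qed
  ultimately show ?thesis by simp
qed
lemma inner_block: "s \<in> blockspace blk i \<Longrightarrow> g \<bullet> s = bproj blk i g \<bullet> s"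
  by (auto simp: inner_vec_def bproj_def blockspace_def intro!: sum.cong)
lemma inner_sum_bproj: "g \<bullet> d = (\<Sum>i\<in>(UNIV::'m::finite set). bproj blk i g \<bullet> bproj blk i d)"
proof -
  have "g \<bullet> d = g \<bullet> (\<Sum>i\<in>(UNIV::'m set). bproj blk i d)" by (simp add: sum_bproj)
  also have "\<dots> = (\<Sum>i\<in>UNIV. g \<bullet> bproj blk i d)" by (simp add: inner_sum_right)
  also have "\<dots> = (\<Sum>i\<in>UNIV. bproj blk i g \<bullet> bproj blk i d)"
    by (intro sum.cong refl inner_block bproj_in)
  finally show ?thesis .
qed
lemma normL_sq: "(\<And>i. L i > 0) \<Longrightarrow> (normL blk L d)\<^sup>2 = (\<Sum>i\<in>UNIV. L i * (norm (bproj blk i d))\<^sup>2)"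
  unfolding normL_def by (intro real_sqrt_pow2 sum_nonneg) (metis less_imp_le mult_nonneg_nonneg zero_le_power2)
lemma dnormL_sq: "(\<And>i. L i > 0) \<Longrightarrow> (dnormL blk L d)\<^sup>2 = (\<Sum>i\<in>UNIV. (1 / L i) * (norm (bproj blk i d))\<^sup>2)"
  unfolding dnormL_def by (intro real_sqrt_pow2 sum_nonneg) (metis less_imp_le mult_nonneg_nonneg zero_le_power2 zero_le_divide_1_iff)
lemma bproj_DL: "bproj blk i (DL blk L y) = L i *\<^sub>R bproj blk i y"
  by (simp add: bproj_def DL_def vec_eq_iff)
lemma norm_conv_sq: fixes s t :: "'a::real_inner" shows
  "(norm ((1 - u) *\<^sub>R s + u *\<^sub>R t))\<^sup>2 = (1-u) * (norm s)\<^sup>2 + u * (norm t)\<^sup>2 - u * (1-u) * (norm (s - t))\<^sup>2"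
  by (simp add: power2_norm_eq_inner inner_add inner_diff inner_commute algebra_simps)
lemma sup_lemma: fixes a b c :: real assumes "\<And>u. 0 < u \<Longrightarrow> u < 1 \<Longrightarrow> a \<le> b - c * u" shows "a \<le> b - c"
proof (rule ccontr)
  assume nt: "\<not> ?thesis"
  have "a \<le> b - c*(1/2)" using assms[of "1/2"] by simp
  hence c: "c > 0" using nt by linarith
  define u where "u = max (1/2) (1 - (a - b + c)/(2*c))"
  have "u < 1" using c nt by (auto simp: u_def field_simps)
  moreover have "0 < u" by (simp add: u_def)
  ultimately have au: "a \<le> b - c * u" using assms by blast
  moreover have "c * u \<ge> c * (1 - (a - b + c)/(2*c))" using c by (simp add: u_def)
  moreover have "c * (1 - (a - b + c)/(2*c)) = c - (a-b+c)/2" using c by (simp add: field_simps)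
  ultimately have "c*u \<ge> c - (a-b+c)/2" by linarith
  then show False using au nt by (simp add: field_simps)
qed



locale rcd =
  fixes blk :: "'n::finite \<Rightarrow> 'm::finite"
    and L :: "'m \<Rightarrow> real"
    and f :: "real^'n \<Rightarrow> real"
    and g :: "real^'n \<Rightarrow> real^'n"
    and h :: "real^'n \<Rightarrow> real"
    and hb :: "'m \<Rightarrow> real^'n \<Rightarrow> real"
  assumes grad: "\<And>x. (f has_derivative (\<lambda>v. g x \<bullet> v)) (at x)"
    and Lpos: "\<And>i. L i > 0"
    and Lip: "\<And>x i s. s \<in> blockspace blk i \<Longrightarrow>
                 norm (bproj blk i (g (x + s)) - bproj blk i (g x)) \<le> L i * norm s"
    and h_cont: "continuous_on UNIV h"
    and h_sep: "\<And>x. h x = (\<Sum>i\<in>UNIV. hb i (bproj blk i x))"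
    and hb_convex: "\<And>i. convex_on (blockspace blk i) (hb i)"
    and F_bdd: "bdd_below (range (\<lambda>x. f x + h x))"
begin

definition "Qb i x s = f x + bproj blk i (g x) \<bullet> s + L i / 2 * (norm s)\<^sup>2 + h (x + s)"
definition "Fs = (INF x. f x + h x)"

lemma F_ge: "Fs \<le> f x + h x"
  unfolding Fs_def by (rule cINF_lower[OF F_bdd]) simp

lemma descent:
  assumes s: "s \<in> blockspace blk i"
  shows "f (x + s) \<le> f x + bproj blk i (g x) \<bullet> s + L i / 2 * (norm s)\<^sup>2"
proof -
  define p where "p t = f (x + t *\<^sub>R s) - t * (g x \<bullet> s) - L i / 2 * t\<^sup>2 * (norm s)\<^sup>2" for t
  define p' where "p' t = g (x + t *\<^sub>R s) \<bullet> s - g x \<bullet> s - L i * t * (norm s)\<^sup>2" for t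
  have der: "DERIV p t :> p' t" for t
  proof -
    have d1: "((\<lambda>t. x + t *\<^sub>R s) has_derivative (\<lambda>u. u *\<^sub>R s)) (at t)"
      by (auto intro!: derivative_eq_intros)
    have e: "(\<lambda>u. g (x + t *\<^sub>R s) \<bullet> (u *\<^sub>R s)) = (*) (g (x + t *\<^sub>R s) \<bullet> s)"
      by (simp add: fun_eq_iff)
    have "((\<lambda>t. f (x + t *\<^sub>R s)) has_derivative (\<lambda>u. g (x + t *\<^sub>R s) \<bullet> (u *\<^sub>R s))) (at t)"
      using has_derivative_compose[OF d1 grad] .
    hence "((\<lambda>t. f (x + t *\<^sub>R s)) has_real_derivative (g (x + t *\<^sub>R s) \<bullet> s)) (at t)"
      unfolding has_field_derivative_def e .
    then show ?thesis unfolding p_def p'_def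
      by (auto intro!: derivative_eq_intros)
  qed
  have p'le: "p' t \<le> 0" if "0 \<le> t" for t
  proof -
    have ts: "t *\<^sub>R s \<in> blockspace blk i" by (rule blockspace_scale[OF s])
    have "g (x + t *\<^sub>R s) \<bullet> s - g x \<bullet> s = (bproj blk i (g (x + t *\<^sub>R s)) - bproj blk i (g x)) \<bullet> s"
      using inner_block[OF s] by (simp add: inner_diff_left)
    also have "\<dots> \<le> norm (bproj blk i (g (x + t *\<^sub>R s)) - bproj blk i (g x)) * norm s"
      by (rule norm_cauchy_schwarz)
    also have "\<dots> \<le> L i * norm (t *\<^sub>R s) * norm s"
      by (intro mult_right_mono Lip ts) simp
    also have "\<dots> = L i * t * (norm s)\<^sup>2" using that by (simp add: power2_eq_square)
    finally show ?thesis unfolding p'_def by simp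
  qed
  obtain z where "0 < z" "z < 1" "p 1 - p 0 = (1 - 0) * p' z"
    using MVT2[of 0 1 p p'] der by auto
  hence "p 1 \<le> p 0" using p'le[of z] by simp
  thus ?thesis unfolding p_def using inner_block[OF s, of "g x"] by simp
qed

lemma hshift:
  assumes s: "s \<in> blockspace blk i"
  shows "h (x + s) = hb i (bproj blk i x + s) + (\<Sum>j\<in>UNIV-{i}. hb j (bproj blk j x))"
proof -
  have "h (x + s) = hb i (bproj blk i (x + s)) + (\<Sum>j\<in>UNIV-{i}. hb j (bproj blk j (x + s)))"
    by (simp add: h_sep sum.remove[of UNIV i])
  also have "(\<Sum>j\<in>UNIV-{i}. hb j (bproj blk j (x + s))) = (\<Sum>j\<in>UNIV-{i}. hb j (bproj blk j x))"
    by (intro sum.cong refl) (auto simp: bproj_add bproj_other[OF s])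
  finally show ?thesis by (simp add: bproj_add bproj_same[OF s])
qed

lemma Qb_conv:
  assumes s: "s \<in> blockspace blk i" and t: "t \<in> blockspace blk i" and u: "0 \<le> u" "u \<le> 1"
  shows "Qb i x ((1-u) *\<^sub>R s + u *\<^sub>R t) \<le> (1-u) * Qb i x s + u * Qb i x t - L i / 2 * u * (1-u) * (norm (s - t))\<^sup>2"
proof -
  define w where "w = (1-u) *\<^sub>R s + u *\<^sub>R t"
  have w: "w \<in> blockspace blk i" unfolding w_def
    by (intro blockspace_add blockspace_scale s t)
  define p where "p = bproj blk i x"
  define c where "c = (\<Sum>j\<in>UNIV-{i}. hb j (bproj blk j x))"
  define G where "G = bproj blk i (g x)"
  have p: "p \<in> blockspace blk i" unfolding p_def by (rule bproj_in)
  have pw: "p + w = (1-u) *\<^sub>R (p + s) + u *\<^sub>R (p + t)" unfolding w_def by (simp add: algebra_simps)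
  have cv: "hb i (p + w) \<le> (1-u) * hb i (p + s) + u * hb i (p + t)"
    unfolding pw by (intro convex_onD[OF hb_convex] blockspace_add p s t u)
  have Gw: "G \<bullet> w = (1-u) * (G \<bullet> s) + u * (G \<bullet> t)" unfolding w_def by (simp add: inner_add_right)
  have nw: "(norm w)\<^sup>2 = (1-u) * (norm s)\<^sup>2 + u * (norm t)\<^sup>2 - u * (1-u) * (norm (s - t))\<^sup>2"
    unfolding w_def by (rule norm_conv_sq)
  have "(1-u) * Qb i x s + u * Qb i x t - L i / 2 * u * (1-u) * (norm (s - t))\<^sup>2 - Qb i x w
      = (1-u) * hb i (p + s) + u * hb i (p + t) - hb i (p + w)"
    unfolding Qb_def hshift[OF s] hshift[OF t] hshift[OF w] G_def[symmetric] p_def[symmetric] c_def[symmetric] Gw nw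
    by (simp add: algebra_simps) (simp add: diff_divide_distrib add_divide_distrib)
  with cv show ?thesis unfolding w_def by linarith
qed

lemma Qb_ge: "s \<in> blockspace blk i \<Longrightarrow> Fs \<le> Qb i x s"
  using descent[of s i x] F_ge[of "x + s"] unfolding Qb_def by linarith

lemma Qb_coercive:
  assumes s: "s \<in> blockspace blk i"
  shows "2 * Fs - Qb i x 0 + L i / 4 * (norm s)\<^sup>2 \<le> Qb i x s"
proof -
  have "Qb i x ((1 - 1/2) *\<^sub>R 0 + (1/2) *\<^sub>R s) \<le> (1-1/2) * Qb i x 0 + (1/2) * Qb i x s - L i / 2 * (1/2) * (1-1/2) * (norm (0 - s))\<^sup>2"
    by (rule Qb_conv) (auto intro: s blockspace_zero)
  moreover have "Fs \<le> Qb i x ((1 - 1/2) *\<^sub>R 0 + (1/2) *\<^sub>R s)"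
    by (intro Qb_ge blockspace_add blockspace_scale s blockspace_zero)
  ultimately show ?thesis by simp
qed

lemma Qb_cont: "continuous_on UNIV (Qb i x)"
proof -
  have "continuous_on UNIV (\<lambda>s. h (x + s))"
    by (rule continuous_on_compose2[OF h_cont]) (auto intro!: continuous_intros)
  then show ?thesis unfolding Qb_def by (intro continuous_intros) auto
qed

lemma Qb_ex: "\<exists>d\<in>blockspace blk i. \<forall>s\<in>blockspace blk i. Qb i x d \<le> Qb i x s"
proof -
  define K where "K = blockspace blk i \<inter> {s. Qb i x s \<le> Qb i x 0}"
  define M where "M = (Qb i x 0 - 2 * Fs + Qb i x 0) / (L i / 4)"
  have Li: "L i > 0" by (rule Lpos)
  have "closed K" unfolding K_def
    by (intro closed_Int closed_blockspace closed_Collect_le Qb_cont continuous_intros)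
  moreover have "bounded K" unfolding bounded_iff
  proof (intro exI ballI)
    fix s assume "s \<in> K"
    hence s: "s \<in> blockspace blk i" and q: "Qb i x s \<le> Qb i x 0" by (auto simp: K_def)
    have "L i / 4 * (norm s)\<^sup>2 \<le> Qb i x 0 - 2 * Fs + Qb i x 0" using Qb_coercive[OF s, of x] q by linarith
    hence "(norm s)\<^sup>2 \<le> M" unfolding M_def using Li by (simp add: field_simps)
    moreover have "norm s \<le> 1 + (norm s)\<^sup>2"
    proof (cases "norm s \<le> 1")
      case True then show ?thesis by (simp add: add_increasing2)
    next
      case False
      hence "norm s * 1 \<le> norm s * norm s" by (intro mult_left_mono) auto
      then show ?thesis by (simp add: power2_eq_square)
    qed
    ultimately show "norm s \<le> 1 + M" by linarith
  qed
  ultimately have "compact K" by (simp add: compact_eq_bounded_closed)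
  moreover have "K \<noteq> {}" using blockspace_zero[of blk i] unfolding K_def by blast
  moreover have "continuous_on K (Qb i x)" using Qb_cont continuous_on_subset by blast
  ultimately obtain d where d: "d \<in> K" "\<forall>y\<in>K. Qb i x d \<le> Qb i x y"
    using continuous_attains_inf by blast
  show ?thesis
  proof (intro bexI ballI)
    show "d \<in> blockspace blk i" using d by (simp add: K_def)
    fix s assume s: "s \<in> blockspace blk i"
    show "Qb i x d \<le> Qb i x s"
    proof (cases "s \<in> K")
      case True then show ?thesis using d by blast
    next
      case False
      hence "Qb i x s > Qb i x 0" using s by (auto simp: K_def)
      moreover have "Qb i x d \<le> Qb i x 0" using d blockspace_zero by (auto simp: K_def)
      ultimately show ?thesis by linarith
    qed
  qed
qed

lemma Qb_uniq:
  assumes d1: "d1 \<in> blockspace blk i" "\<forall>s\<in>blockspace blk i. Qb i x d1 \<le> Qb i x s"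
    and d2: "d2 \<in> blockspace blk i" "\<forall>s\<in>blockspace blk i. Qb i x d2 \<le> Qb i x s"
  shows "d1 = d2"
proof -
  have m: "(1 - 1/2) *\<^sub>R d1 + (1/2) *\<^sub>R d2 \<in> blockspace blk i"
    by (intro blockspace_add blockspace_scale d1 d2)
  have "Qb i x ((1 - 1/2) *\<^sub>R d1 + (1/2) *\<^sub>R d2) \<le> (1-1/2) * Qb i x d1 + (1/2) * Qb i x d2 - L i / 2 * (1/2) * (1-1/2) * (norm (d1 - d2))\<^sup>2"
    by (rule Qb_conv) (auto intro: d1 d2)
  moreover have "Qb i x d1 \<le> Qb i x ((1 - 1/2) *\<^sub>R d1 + (1/2) *\<^sub>R d2)" using d1 m by blast
  moreover have "Qb i x d2 \<le> Qb i x d1" using d1 d2 by blast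
  ultimately have "L i / 8 * (norm (d1 - d2))\<^sup>2 \<le> 0" by simp
  hence "(norm (d1 - d2))\<^sup>2 \<le> 0" using Lpos[of i] by (simp add: mult_le_0_iff)
  thus ?thesis by simp
qed

definition "dd i x = (THE d. d \<in> blockspace blk i \<and> (\<forall>s\<in>blockspace blk i. Qb i x d \<le> Qb i x s))"

lemma dd_ex1: "\<exists>!d. d \<in> blockspace blk i \<and> (\<forall>s\<in>blockspace blk i. Qb i x d \<le> Qb i x s)"
  using Qb_ex[of i x] Qb_uniq[of _ i x] by blast

lemma dd_prop: "dd i x \<in> blockspace blk i" "\<forall>s\<in>blockspace blk i. Qb i x (dd i x) \<le> Qb i x s"
  using theI'[OF dd_ex1[of i x]] unfolding dd_def by auto

lemma step_eq: "rcd_step blk L f g h i x = x + dd i x"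
  by (simp add: rcd_step_def dd_def Qb_def)

lemma aux_conv: fixes q a c u :: real assumes "q \<le> (1-u)*a + u*q - c*u*(1-u)" "u < 1" shows "q \<le> a - c*u"
proof -
  have "(1-u) * q \<le> (1-u) * (a - c*u)" using assms(1) by (simp add: algebra_simps)
  thus ?thesis using assms(2) by simp
qed

lemma decrease: "f (x + dd i x) + h (x + dd i x) \<le> f x + h x - L i / 2 * (norm (dd i x))\<^sup>2"
proof -
  let ?d = "dd i x"
  have dB: "?d \<in> blockspace blk i" by (rule dd_prop)
  have "Qb i x ?d \<le> Qb i x 0 - L i / 2 * (norm ?d)\<^sup>2"
  proof (rule sup_lemma[where c = "L i / 2 * (norm ?d)\<^sup>2"])
    fix u :: real assume u: "0 < u" "u < 1"
    have "Qb i x ((1-u) *\<^sub>R 0 + u *\<^sub>R ?d) \<le> (1-u) * Qb i x 0 + u * Qb i x ?d - L i / 2 * u * (1-u) * (norm (0 - ?d))\<^sup>2"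
      by (rule Qb_conv) (use u dB blockspace_zero in auto)
    moreover have "Qb i x ?d \<le> Qb i x ((1-u) *\<^sub>R 0 + u *\<^sub>R ?d)"
      using dd_prop(2) blockspace_scale[OF dB] by simp
    ultimately have "Qb i x ?d \<le> (1-u) * Qb i x 0 + u * Qb i x ?d - (L i / 2 * (norm ?d)\<^sup>2) * u * (1-u)"
      by (simp add: algebra_simps)
    thus "Qb i x ?d \<le> Qb i x 0 - L i / 2 * (norm ?d)\<^sup>2 * u" by (rule aux_conv) (rule u(2))
  qed
  moreover have "f (x + ?d) + h (x + ?d) \<le> Qb i x ?d" using descent[OF dB, of x] unfolding Qb_def by linarith
  moreover have "Qb i x 0 = f x + h x" by (simp add: Qb_def)
  ultimately show ?thesis by linarith
qed

end


context rcd begin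

definition "q i x s = bproj blk i (g x) \<bullet> s + L i / 2 * (norm s)\<^sup>2 + hb i (bproj blk i x + s)"

lemma Qb_q: "s \<in> blockspace blk i \<Longrightarrow> Qb i x s = f x + q i x s + (\<Sum>j\<in>UNIV-{i}. hb j (bproj blk j x))"
  unfolding Qb_def q_def by (simp add: hshift)

lemma q_min: "s \<in> blockspace blk i \<Longrightarrow> q i x (dd i x) \<le> q i x s"
  using dd_prop(2)[of i x] Qb_q[of s i x] Qb_q[OF dd_prop(1), of i x] by force

lemma q_min_unique:
  assumes d: "d \<in> blockspace blk i" and m: "\<forall>s\<in>blockspace blk i. q i x d \<le> q i x s"
  shows "d = dd i x"
proof (rule Qb_uniq[OF d _ dd_prop])
  show "\<forall>s\<in>blockspace blk i. Qb i x d \<le> Qb i x s"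
    using m Qb_q[OF d] Qb_q by force
qed

lemma Qfull_eq: "f x + g x \<bullet> d + 1/2 * (normL blk L d)\<^sup>2 + h (x + d) = f x + (\<Sum>i\<in>UNIV. q i x (bproj blk i d))"
proof -
  have "(\<Sum>i\<in>UNIV. q i x (bproj blk i d)) = (\<Sum>i\<in>UNIV. bproj blk i (g x) \<bullet> bproj blk i d)
     + 1/2 * (\<Sum>i\<in>UNIV. L i * (norm (bproj blk i d))\<^sup>2) + (\<Sum>i\<in>UNIV. hb i (bproj blk i (x + d)))"
    by (simp add: q_def sum.distrib sum_distrib_left bproj_add)
  then show ?thesis
    using inner_sum_bproj[where g="g x" and d=d and blk=blk] normL_sq[OF Lpos, where blk=blk and d=d] h_sep[of "x + d"] by simp
qed

lemma bproj_D: "bproj blk i (\<Sum>j\<in>UNIV. dd j x) = dd i x"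
proof -
  have "bproj blk i (\<Sum>j\<in>UNIV. dd j x) = (\<Sum>j\<in>UNIV. if j = i then dd i x else 0)"
    unfolding bproj_sum
  proof (intro sum.cong refl)
    fix j show "bproj blk i (dd j x) = (if j = i then dd i x else 0)"
      using bproj_same[OF dd_prop(1)[of j x]] bproj_other[OF dd_prop(1)[of j x], of i] by auto
  qed
  then show ?thesis by simp
qed

lemma dL_eq: "dL blk L f g h x = (\<Sum>j\<in>UNIV. dd j x)"
  unfolding dL_def
proof (rule the_equality)
  let ?D = "\<Sum>j\<in>UNIV. dd j x"
  show "\<forall>s. f x + g x \<bullet> ?D + 1/2 * (normL blk L ?D)\<^sup>2 + h (x + ?D)
              \<le> f x + g x \<bullet> s + 1/2 * (normL blk L s)\<^sup>2 + h (x + s)"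
    unfolding Qfull_eq bproj_D by (auto intro!: sum_mono q_min bproj_in)
next
  fix d' assume H: "\<forall>s. f x + g x \<bullet> d' + 1/2 * (normL blk L d')\<^sup>2 + h (x + d')
              \<le> f x + g x \<bullet> s + 1/2 * (normL blk L s)\<^sup>2 + h (x + s)"
  have eq: "bproj blk i d' = dd i x" for i
  proof (rule q_min_unique[OF bproj_in], intro ballI)
    fix t assume t: "t \<in> blockspace blk i"
    define s where "s = d' - bproj blk i d' + t"
    have bi: "bproj blk i s = t"
      unfolding s_def by (simp add: bproj_add bproj_diff bproj_same[OF bproj_in] bproj_same[OF t])
    have bj: "bproj blk j s = bproj blk j d'" if "j \<noteq> i" for j
      unfolding s_def using that
      by (simp add: bproj_add bproj_diff bproj_other[OF bproj_in] bproj_other[OF t])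
    have "(\<Sum>j\<in>UNIV. q j x (bproj blk j d')) \<le> (\<Sum>j\<in>UNIV. q j x (bproj blk j s))"
      using H[rule_format, of s] unfolding Qfull_eq by simp
    moreover have "(\<Sum>j\<in>UNIV-{i}. q j x (bproj blk j s)) = (\<Sum>j\<in>UNIV-{i}. q j x (bproj blk j d'))"
      by (intro sum.cong refl) (simp add: bj)
    ultimately show "q i x (bproj blk i d') \<le> q i x t"
      by (simp add: sum.remove[of UNIV i] bi)
  qed
  have "d' = (\<Sum>i\<in>UNIV. bproj blk i d')" by (simp add: sum_bproj)
  also have "\<dots> = (\<Sum>j\<in>UNIV. dd j x)" by (simp add: eq)
  finally show "d' = (\<Sum>j\<in>UNIV. dd j x)" .
qed

lemma M1_sq: "(M1 blk L f g h x)\<^sup>2 = (\<Sum>i\<in>UNIV. L i * (norm (dd i x))\<^sup>2)"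
  unfolding M1_def dnormL_sq[OF Lpos] bproj_DL dL_eq bproj_D
proof (intro sum.cong refl)
  fix i
  have "L i > 0" by (rule Lpos)
  then show "1 / L i * (norm (L i *\<^sub>R dd i x))\<^sup>2 = L i * (norm (dd i x))\<^sup>2"
    by (simp add: power_mult_distrib power2_eq_square)
qed

lemma step_sum: "(\<Sum>i\<in>UNIV. f (rcd_step blk L f g h i x) + h (rcd_step blk L f g h i x))
   \<le> real CARD('m) * (f x + h x) - (M1 blk L f g h x)\<^sup>2 / 2"
proof -
  have "(\<Sum>i\<in>UNIV. f (rcd_step blk L f g h i x) + h (rcd_step blk L f g h i x))
     \<le> (\<Sum>i\<in>(UNIV::'m set). f x + h x - L i / 2 * (norm (dd i x))\<^sup>2)"
    unfolding step_eq by (intro sum_mono decrease)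
  also have "\<dots> = real CARD('m) * (f x + h x) - (\<Sum>i\<in>UNIV. L i * (norm (dd i x))\<^sup>2) / 2"
    by (simp add: sum_subtractf sum_divide_distrib[symmetric])
  finally show ?thesis unfolding M1_sq .
qed

end



lemma fin_lists: "finite {is::'m::finite list. length is = l}"
  using finite_lists_length_eq[of "UNIV::'m set" l] by simp

lemma card_lists: "card {is::'m::finite list. length is = l} = CARD('m) ^ l"
  using card_lists_length_eq[of "UNIV::'m set" l] by simp

lemma lists_Suc_sum:
  fixes Z :: "'m::finite list \<Rightarrow> real"
  shows "(\<Sum>is\<in>{is. length is = Suc l}. Z is) = (\<Sum>is\<in>{is::'m list. length is = l}. \<Sum>i\<in>UNIV. Z (is @ [i]))"
proof -
  have bij: "bij_betw (\<lambda>(is,i). is @ [i]) ({is::'m list. length is = l} \<times> UNIV) {is. length is = Suc l}"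
    unfolding bij_betw_def
  proof
    show "inj_on (\<lambda>(is,i). is @ [i]) ({is::'m list. length is = l} \<times> UNIV)"
      by (auto simp: inj_on_def)
    show "(\<lambda>(is,i). is @ [i]) ` ({is::'m list. length is = l} \<times> UNIV) = {is. length is = Suc l}"
    proof (rule set_eqI, rule iffI)
      fix xs :: "'m list" assume "xs \<in> {is. length is = Suc l}"
      hence "xs \<noteq> []" "length (butlast xs) = l" by auto
      then show "xs \<in> (\<lambda>(is,i). is @ [i]) ` ({is::'m list. length is = l} \<times> UNIV)"
        by (intro image_eqI[where x="(butlast xs, last xs)"]) auto
    qed auto
  qed
  have "(\<Sum>is\<in>{is::'m list. length is = l}. \<Sum>i\<in>UNIV. Z (is @ [i]))
      = (\<Sum>p\<in>{is::'m list. length is = l} \<times> UNIV. Z ((\<lambda>(is,i). is @ [i]) p))"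
    unfolding sum.cartesian_product by (intro sum.cong) (auto split: prod.splits)
  also have "\<dots> = (\<Sum>is\<in>{is. length is = Suc l}. Z is)"
    by (rule sum.reindex_bij_betw[OF bij])
  finally show ?thesis ..
qed

theorem theorem2:
  fixes blk :: "'n::finite \<Rightarrow> 'm::finite"
    and L :: "'m \<Rightarrow> real"
    and f :: "real^'n \<Rightarrow> real"
    and g :: "real^'n \<Rightarrow> real^'n"
    and h :: "real^'n \<Rightarrow> real"
    and hb :: "'m \<Rightarrow> real^'n \<Rightarrow> real"
    and x0 :: "real^'n"
    and k :: nat
  assumes blocks_nonempty: "surj blk"
    and grad: "\<And>x. (f has_derivative (\<lambda>v. g x \<bullet> v)) (at x)"
    and Lpos: "\<And>i. L i > 0"
    and Lip: "\<And>x i s. s \<in> blockspace blk i \<Longrightarrow>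
                 norm (bproj blk i (g (x + s)) - bproj blk i (g x)) \<le> L i * norm s"
    and h_cont: "continuous_on UNIV h"
    and h_sep: "\<And>x. h x = (\<Sum>i\<in>UNIV. hb i (bproj blk i x))"
    and hb_convex: "\<And>i. convex_on (blockspace blk i) (hb i)"
    and F_bdd: "bdd_below (range (\<lambda>x. f x + h x))"
  shows "Min ((\<lambda>l. unif_expect l (\<lambda>is. (M1 blk L f g h (rcd_iter blk L f g h x0 is))\<^sup>2)) ` {0..k})
         \<le> 2 * real (CARD('m)) * (f x0 + h x0 - (INF x. f x + h x)) / (real k + 1)"
proof -
  interpret rcd blk L f g h hb
    by unfold_locales (use assms in auto)
  define N where "N = real CARD('m)"
  have N: "N > 0" unfolding N_def by simp
  define It where "It is = rcd_iter blk L f g h x0 is" for "is"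
  have It_snoc: "It (is @ [i]) = rcd_step blk L f g h i (It is)" for "is" i
    unfolding It_def rcd_iter_def by simp
  define Sx where "Sx l Z = (\<Sum>is\<in>{is::'m list. length is = l}. Z is)" for l and Z :: "'m list \<Rightarrow> real"
  define a where "a l = Sx l (\<lambda>is. f (It is) + h (It is)) / N ^ l" for l
  define m where "m l = unif_expect l (\<lambda>is. (M1 blk L f g h (rcd_iter blk L f g h x0 is))\<^sup>2)" for l
  have m_eq: "m l = Sx l (\<lambda>is. (M1 blk L f g h (It is))\<^sup>2) / N ^ l" for l
    unfolding m_def unif_expect_def Sx_def N_def It_def ..
  have key: "a (Suc l) \<le> a l - m l / (2 * N)" for l
  proof -
    have "Sx (Suc l) (\<lambda>is. f (It is) + h (It is))
        = Sx l (\<lambda>is. \<Sum>i\<in>UNIV. f (rcd_step blk L f g h i (It is)) + h (rcd_step blk L f g h i (It is)))"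
      unfolding Sx_def lists_Suc_sum It_snoc ..
    also have "\<dots> \<le> Sx l (\<lambda>is. N * (f (It is) + h (It is)) - (M1 blk L f g h (It is))\<^sup>2 / 2)"
      unfolding Sx_def N_def by (intro sum_mono step_sum)
    also have "\<dots> = N * Sx l (\<lambda>is. f (It is) + h (It is)) - Sx l (\<lambda>is. (M1 blk L f g h (It is))\<^sup>2) / 2"
      unfolding Sx_def by (simp add: sum_subtractf sum_distrib_left sum_divide_distrib)
    finally have "Sx (Suc l) (\<lambda>is. f (It is) + h (It is)) \<le> N * Sx l (\<lambda>is. f (It is) + h (It is)) - Sx l (\<lambda>is. (M1 blk L f g h (It is))\<^sup>2) / 2" .
    hence "Sx (Suc l) (\<lambda>is. f (It is) + h (It is)) / N ^ Suc l \<le> (N * Sx l (\<lambda>is. f (It is) + h (It is)) - Sx l (\<lambda>is. (M1 blk L f g h (It is))\<^sup>2) / 2) / N ^ Suc l"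
      using N by (intro divide_right_mono) auto
    also have "\<dots> = a l - m l / (2 * N)"
      unfolding a_def m_eq using N by (simp add: field_simps)
    finally show ?thesis unfolding a_def .
  qed
  have tele: "(\<Sum>l<Suc j. m l) \<le> 2 * N * (a 0 - a (Suc j))" for j
  proof (induction j)
    case 0 then show ?case using key[of 0] N by (simp add: field_simps)
  next
    case (Suc j)
    have "m (Suc j) \<le> 2 * N * (a (Suc j) - a (Suc (Suc j)))" using key[of "Suc j"] N by (simp add: field_simps)
    then show ?case using Suc by (simp add: algebra_simps)
  qed
  have a0: "a 0 = f x0 + h x0"
  proof -
    have "{is::'m list. length is = 0} = {[]}" by auto
    then show ?thesis unfolding a_def Sx_def It_def rcd_iter_def by simp
  qed
  have aF: "a l \<ge> Fs" for l
  proof -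
    have "Sx l (\<lambda>_. Fs) \<le> Sx l (\<lambda>is. f (It is) + h (It is))"
      unfolding Sx_def by (intro sum_mono F_ge)
    moreover have "Sx l (\<lambda>_. Fs) = N ^ l * Fs" unfolding Sx_def N_def by (simp add: card_lists)
    ultimately show ?thesis unfolding a_def using N by (simp add: field_simps)
  qed
  define Mn where "Mn = Min (m ` {0..k})"
  have "(\<Sum>l<Suc k. Mn) \<le> (\<Sum>l<Suc k. m l)"
    unfolding Mn_def by (intro sum_mono Min_le) auto
  also have "\<dots> \<le> 2 * N * (f x0 + h x0 - Fs)"
    using tele[of k] aF[of "Suc k"] a0 N by (smt (verit) mult_left_mono)
  finally have "(real k + 1) * Mn \<le> 2 * N * (f x0 + h x0 - Fs)" by (simp add: add.commute)
  hence "Mn \<le> 2 * N * (f x0 + h x0 - Fs) / (real k + 1)"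
    by (simp add: field_simps)
  then show ?thesis unfolding Mn_def m_def N_def Fs_def .
qed


end
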